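(* Let $\{\phi_n\}_{n\in\mathbb{N}}\subset\mathcal{SA}_\Psi(\mathbb{C})$. Then there exists $\Phi\in\mathcal{SA}_\Psi(\ell^2,\ell^2)$ such that $\langle\Phi(z)e_i,e_j\rangle=\phi_i(z)\delta_{ij}$ for all $i,j\in\mathbb{N}$ and all $z\in\Omega$, where $\{e_i\}$ is the standard orthonormal basis of $\ell^2$.
   Context: Let $\Omega\subset\mathbb{C}^n$ be a bounded domain. A family $\Psi$ of functions $\Omega\to\mathbb{C}$ is a collection of test functions if $\sup_{\psi\in\Psi}|\psi(x)|<1$ for each $x\in\Omega$ and, for each finite $F\subset\Omega$, the restrictions $\{\psi|_F\}$ together with $1$ generate the algebra of all functions $F\to\mathbb{C}$. For a Hilbert space $\mathcal{E}$, a function $K:\Omega\times\Omega\to B(\mathcal{E})$ is a positive kernel if $\sum_{i,j=1}^n\langle K(x_i,x_j)e_j,e_i\rangle\ge 0$ for all finite choices of $x_i\in\Omega$, $e_i\in\mathcal{E}$; $\mathcal{H}(K)$ is its reproducing kernel Hilbert space. $K$ is $\Psi$-admissible if for each $\psi\in\Psi$ multiplication by $\psi$ is a contraction on $\mathcal{H}(K)$; $\mathcal{K}_\Psi(\mathcal{E})$ is the set of such kernels. For Hilbert spaces $\mathcal{U},\mathcal{Y}$, $H^\infty_\Psi(\mathcal{U},\mathcal{Y})$ is the set of $S:\Omega\to B(\mathcal{U},\mathcal{Y})$ for which there is $C\ge0$ with $(x,y)\mapsto(C^2I_{\mathcal{Y}}-S(x)S(y)^* )\otimes K(x,y)$ a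 positive $B(\mathcal{Y}\otimes\mathcal{Y})$-valued kernel for every $K\in\mathcal{K}_\Psi(\mathcal{Y})$; $\|S\|_\Psi$ is the infimum of such $C$, and $\mathcal{SA}_\Psi(\mathcal{U},\mathcal{Y})=\{S:\|S\|_\Psi\le1\}$ is the $\Psi$-Schur–Agler class; $\mathcal{SA}_\Psi(\mathbb{C})=\mathcal{SA}_\Psi(\mathbb{C},\mathbb{C})$. *)

theory Defs
  imports "HOL-Analysis.Analysis"
begin

text \<open>Hilbert spaces are modelled concretely as \<open>\<ell>\<^sup>2(I)\<close> for an index type \<open>'i\<close>
  (every Hilbert space is unitarily equivalent to such a space):
  \<open>\<complex> = \<ell>\<^sup>2(unit)\<close>, \<open>\<ell>\<^sup>2 = \<ell>\<^sup>2(nat)\<close>, \<open>\<ell>\<^sup>2(I) \<otimes> \<ell>\<^sup>2(J) = \<ell>\<^sup>2(I \<times> J)\<close>.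
  Bounded operators \<open>\<ell>\<^sup>2(J) \<rightarrow> \<ell>\<^sup>2(I)\<close> are represented by their matrices
  \<open>A i j = \<langle>A e_j, e_i\<rangle>\<close>.\<close>

type_synonym 'i vec = "'i \<Rightarrow> complex"
type_synonym ('i, 'j) mat = "'i \<Rightarrow> 'j \<Rightarrow> complex"

definition is_l2 :: "'i vec \<Rightarrow> bool" where
  "is_l2 v \<longleftrightarrow> (\<lambda>i. (cmod (v i))\<^sup>2) summable_on UNIV"

definition l2norm :: "'i vec \<Rightarrow> real" where
  "l2norm v = sqrt (\<Sum>\<^sub>\<infinity>i. (cmod (v i))\<^sup>2)"

definition cinner :: "'i vec \<Rightarrow> 'i vec \<Rightarrow> complex" where
  "cinner v w = (\<Sum>\<^sub>\<infinity>i. v i * cnj (w i))"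

definition std_basis :: "'i \<Rightarrow> 'i vec" where
  "std_basis k = (\<lambda>i. if i = k then 1 else 0)"

definition mat_app :: "('i, 'j) mat \<Rightarrow> 'j vec \<Rightarrow> 'i vec" where
  "mat_app A v = (\<lambda>i. \<Sum>\<^sub>\<infinity>j. A i j * v j)"

definition bounded_mat :: "('i, 'j) mat \<Rightarrow> bool" where
  "bounded_mat A \<longleftrightarrow> (\<exists>C. \<forall>v. is_l2 v \<longrightarrow>
      (\<forall>i. (\<lambda>j. A i j * v j) summable_on UNIV) \<and>
      is_l2 (mat_app A v) \<and> l2norm (mat_app A v) \<le> C * l2norm v)"

definition id_mat :: "('i, 'i) mat" where
  "id_mat = (\<lambda>i j. if i = j then 1 else 0)"

definition mat_adj :: "('i, 'j) mat \<Rightarrow> ('j, 'i) mat" where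
  "mat_adj A = (\<lambda>j i. cnj (A i j))"

definition mat_mult :: "('i, 'j) mat \<Rightarrow> ('j, 'k) mat \<Rightarrow> ('i, 'k) mat" where
  "mat_mult A B = (\<lambda>i k. \<Sum>\<^sub>\<infinity>j. A i j * B j k)"

definition mat_scale :: "complex \<Rightarrow> ('i, 'j) mat \<Rightarrow> ('i, 'j) mat" where
  "mat_scale c A = (\<lambda>i j. c * A i j)"

definition mat_diff :: "('i, 'j) mat \<Rightarrow> ('i, 'j) mat \<Rightarrow> ('i, 'j) mat" where
  "mat_diff A B = (\<lambda>i j. A i j - B i j)"

definition mat_tensor :: "('i, 'j) mat \<Rightarrow> ('i2, 'j2) mat \<Rightarrow> ('i \<times> 'i2, 'j \<times> 'j2) mat" where
  "mat_tensor A B = (\<lambda>(i, i') (j, j'). A i j * B i' j')"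

definition pos_kernel :: "'a set \<Rightarrow> ('a \<Rightarrow> 'a \<Rightarrow> ('i, 'i) mat) \<Rightarrow> bool" where
  "pos_kernel \<Omega> K \<longleftrightarrow>
     (\<forall>x\<in>\<Omega>. \<forall>y\<in>\<Omega>. bounded_mat (K x y)) \<and>
     (\<forall>(n::nat) (x::nat \<Rightarrow> 'a) (e::nat \<Rightarrow> 'i vec).
        (\<forall>k<n. x k \<in> \<Omega> \<and> is_l2 (e k)) \<longrightarrow>
        (let s = (\<Sum>i<n. \<Sum>j<n. cinner (mat_app (K (x i) (x j)) (e j)) (e i))
         in Im s = 0 \<and> Re s \<ge> 0))"

text \<open>\<open>rkhs_ball \<Omega> K c f\<close>: the function \<open>f : \<Omega> \<rightarrow> \<ell>\<^sup>2(I)\<close> belongs to \<open>\<H>(K)\<close> with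
  \<open>\<parallel>f\<parallel>\<^sub>\<H>\<^sub>(\<^sub>K\<^sub>) \<le> c\<close>, i.e. \<open>|\<langle>f, g\<rangle>| \<le> c \<parallel>g\<parallel>\<close> for all \<open>g = \<Sum>\<^sub>j K(\<cdot>,x\<^sub>j) e\<^sub>j\<close> in the
  dense span of kernel functions (using the reproducing property
  \<open>\<langle>f, K(\<cdot>,x) e\<rangle> = \<langle>f(x), e\<rangle>\<close>).\<close>
definition rkhs_ball :: "'a set \<Rightarrow> ('a \<Rightarrow> 'a \<Rightarrow> ('i, 'i) mat) \<Rightarrow> real \<Rightarrow> ('a \<Rightarrow> 'i vec) \<Rightarrow> bool" where
  "rkhs_ball \<Omega> K c f \<longleftrightarrow>
     (\<forall>x\<in>\<Omega>. is_l2 (f x)) \<and>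
     (\<forall>(n::nat) (x::nat \<Rightarrow> 'a) (e::nat \<Rightarrow> 'i vec).
        (\<forall>k<n. x k \<in> \<Omega> \<and> is_l2 (e k)) \<longrightarrow>
        (cmod (\<Sum>k<n. cinner (f (x k)) (e k)))\<^sup>2 \<le>
          c\<^sup>2 * Re (\<Sum>i<n. \<Sum>j<n. cinner (mat_app (K (x i) (x j)) (e j)) (e i)))"

definition mult_contraction :: "'a set \<Rightarrow> ('a \<Rightarrow> 'a \<Rightarrow> ('i, 'i) mat) \<Rightarrow> ('a \<Rightarrow> complex) \<Rightarrow> bool" where
  "mult_contraction \<Omega> K \<psi> \<longleftrightarrow>
     (\<forall>c f. c \<ge> 0 \<longrightarrow> rkhs_ball \<Omega> K c f \<longrightarrow>
        rkhs_ball \<Omega> K c (\<lambda>x. (\<lambda>i. \<psi> x * f x i)))"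

definition admissible_kernels :: "'a set \<Rightarrow> ('a \<Rightarrow> complex) set \<Rightarrow> ('a \<Rightarrow> 'a \<Rightarrow> ('i, 'i) mat) set" where
  "admissible_kernels \<Omega> \<Psi> =
     {K. pos_kernel \<Omega> K \<and> (\<forall>\<psi>\<in>\<Psi>. mult_contraction \<Omega> K \<psi>)}"

inductive gen_alg :: "('a \<Rightarrow> complex) set \<Rightarrow> ('a \<Rightarrow> complex) \<Rightarrow> bool" for \<Psi> where
  gen_const: "gen_alg \<Psi> (\<lambda>_. c)"
| gen_base: "\<psi> \<in> \<Psi> \<Longrightarrow> gen_alg \<Psi> \<psi>"
| gen_add: "gen_alg \<Psi> f \<Longrightarrow> gen_alg \<Psi> g \<Longrightarrow> gen_alg \<Psi> (\<lambda>x. f x + g x)"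
| gen_mult: "gen_alg \<Psi> f \<Longrightarrow> gen_alg \<Psi> g \<Longrightarrow> gen_alg \<Psi> (\<lambda>x. f x * g x)"

definition test_functions :: "'a set \<Rightarrow> ('a \<Rightarrow> complex) set \<Rightarrow> bool" where
  "test_functions \<Omega> \<Psi> \<longleftrightarrow>
     (\<forall>x\<in>\<Omega>. \<exists>r<1. \<forall>\<psi>\<in>\<Psi>. cmod (\<psi> x) \<le> r) \<and>
     (\<forall>F. finite F \<and> F \<subseteq> \<Omega> \<longrightarrow>
        (\<forall>g::'a \<Rightarrow> complex. \<exists>h. gen_alg \<Psi> h \<and> (\<forall>x\<in>F. h x = g x)))"

definition Hinf_bounds :: "'a set \<Rightarrow> ('a \<Rightarrow> complex) set \<Rightarrow> ('a \<Rightarrow> ('y, 'u) mat) \<Rightarrow> real set" where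
  "Hinf_bounds \<Omega> \<Psi> S =
     {C. C \<ge> 0 \<and>
        (\<forall>K \<in> admissible_kernels \<Omega> \<Psi>.
           pos_kernel \<Omega> (\<lambda>x y. mat_tensor
               (mat_diff (mat_scale (complex_of_real (C\<^sup>2)) id_mat) (mat_mult (S x) (mat_adj (S y))))
               (K x y :: ('y, 'y) mat)))}"

definition Hinf :: "'a set \<Rightarrow> ('a \<Rightarrow> complex) set \<Rightarrow> ('a \<Rightarrow> ('y, 'u) mat) set" where
  "Hinf \<Omega> \<Psi> = {S. (\<forall>x\<in>\<Omega>. bounded_mat (S x)) \<and> Hinf_bounds \<Omega> \<Psi> S \<noteq> {}}"

definition Hinf_norm :: "'a set \<Rightarrow> ('a \<Rightarrow> complex) set \<Rightarrow> ('a \<Rightarrow> ('y, 'u) mat) \<Rightarrow> real" where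
  "Hinf_norm \<Omega> \<Psi> S = Inf (Hinf_bounds \<Omega> \<Psi> S)"

definition schur_agler :: "'a set \<Rightarrow> ('a \<Rightarrow> complex) set \<Rightarrow> ('a \<Rightarrow> ('y, 'u) mat) set" where
  "schur_agler \<Omega> \<Psi> = {S. S \<in> Hinf \<Omega> \<Psi> \<and> Hinf_norm \<Omega> \<Psi> S \<le> 1}"

definition scalar_op :: "('a \<Rightarrow> complex) \<Rightarrow> ('a \<Rightarrow> (unit, unit) mat)" where
  "scalar_op \<phi> = (\<lambda>x _ _. \<phi> x)"

end

theory Submission
  imports Defs
begin

section \<open>l2 basics\<close>

lemma l2_summable_sub: "is_l2 v \<Longrightarrow> (\<lambda>i. (cmod (v i))\<^sup>2) summable_on A"
  unfolding is_l2_def by (rule summable_on_subset[of _ UNIV]) auto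

lemma l2_prod_summable:
  assumes "is_l2 u" "is_l2 w"
  shows "(\<lambda>i. u i * w i) summable_on A"
proof -
  have g: "(\<lambda>i. (1/2) * ((cmod (u i))\<^sup>2 + (cmod (w i))\<^sup>2)) summable_on A"
    using l2_summable_sub[OF assms(1)] l2_summable_sub[OF assms(2)]
    by (intro summable_on_cmult_right summable_on_add) auto
  have "(\<lambda>i. norm (u i * w i)) summable_on A"
  proof (rule summable_on_comparison_test[OF g])
    fix i
    have "0 \<le> (cmod (u i) - cmod (w i))\<^sup>2" by simp
    then have "cmod (u i) * cmod (w i) \<le> (1/2) * ((cmod (u i))\<^sup>2 + (cmod (w i))\<^sup>2)"
      by (simp add: power2_diff)
    then show "norm (u i * w i) \<le> (1/2) * ((cmod (u i))\<^sup>2 + (cmod (w i))\<^sup>2)"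
      by (simp add: norm_mult)
  qed simp
  then show ?thesis using summable_on_iff_abs_summable_on_complex by blast
qed

lemma is_l2_cnj: "is_l2 u \<Longrightarrow> is_l2 (\<lambda>i. cnj (u i))"
  unfolding is_l2_def by simp

lemma is_l2_scale: "is_l2 u \<Longrightarrow> is_l2 (\<lambda>i. c * u i)"
  unfolding is_l2_def by (simp add: norm_mult power_mult_distrib summable_on_cmult_right)

lemma is_l2_zero: "is_l2 (\<lambda>i. 0)"
  unfolding is_l2_def by simp

lemma is_l2_add:
  assumes "is_l2 u" "is_l2 w"
  shows "is_l2 (\<lambda>i. u i + w i)"
  unfolding is_l2_def
proof (rule summable_on_comparison_test)
  show "(\<lambda>i. 2 * (cmod (u i))\<^sup>2 + 2 * (cmod (w i))\<^sup>2) summable_on UNIV"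
    using assms unfolding is_l2_def
    by (intro summable_on_add summable_on_cmult_right) auto
  fix i
  have "cmod (u i + w i) \<le> cmod (u i) + cmod (w i)" by (rule norm_triangle_ineq)
  then have "(cmod (u i + w i))\<^sup>2 \<le> (cmod (u i) + cmod (w i))\<^sup>2"
    by (simp add: power_mono)
  also have "\<dots> \<le> 2 * (cmod (u i))\<^sup>2 + 2 * (cmod (w i))\<^sup>2"
  proof -
    have "0 \<le> (cmod (u i) - cmod (w i))\<^sup>2" by simp
    then show ?thesis by (simp add: power2_diff power2_sum)
  qed
  finally show "(cmod (u i + w i))\<^sup>2 \<le> 2 * (cmod (u i))\<^sup>2 + 2 * (cmod (w i))\<^sup>2" .
qed simp

lemma is_l2_sum:
  assumes "finite B" "\<And>b. b \<in> B \<Longrightarrow> is_l2 (f b)"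
  shows "is_l2 (\<lambda>i. \<Sum>b\<in>B. f b i)"
  using assms
proof (induction B rule: finite_induct)
  case empty then show ?case by (simp add: is_l2_zero)
next
  case (insert x F) then show ?case by (simp add: is_l2_add)
qed

lemma cinner_add_left:
  assumes "is_l2 u" "is_l2 w" "is_l2 v"
  shows "cinner (\<lambda>i. u i + w i) v = cinner u v + cinner w v"
proof -
  have "cinner (\<lambda>i. u i + w i) v = (\<Sum>\<^sub>\<infinity>i. u i * cnj (v i) + w i * cnj (v i))"
    unfolding cinner_def by (simp add: distrib_right)
  also have "\<dots> = cinner u v + cinner w v"
    unfolding cinner_def
    by (intro infsum_add l2_prod_summable assms is_l2_cnj)
  finally show ?thesis .
qed

lemma cinner_add_right:
  assumes "is_l2 u" "is_l2 w" "is_l2 v"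
  shows "cinner v (\<lambda>i. u i + w i) = cinner v u + cinner v w"
proof -
  have "cinner v (\<lambda>i. u i + w i) = (\<Sum>\<^sub>\<infinity>i. v i * cnj (u i) + v i * cnj (w i))"
    unfolding cinner_def by (simp add: distrib_left)
  also have "\<dots> = cinner v u + cinner v w"
    unfolding cinner_def
    by (intro infsum_add l2_prod_summable assms is_l2_cnj)
  finally show ?thesis .
qed

lemma cinner_scale_left: "cinner (\<lambda>i. c * u i) v = c * cinner u v"
  unfolding cinner_def by (simp add: mult.assoc infsum_cmult_right')

lemma cinner_scale_right: "cinner u (\<lambda>i. c * v i) = cnj c * cinner u v"
proof -
  have "cinner u (\<lambda>i. c * v i) = (\<Sum>\<^sub>\<infinity>i. cnj c * (u i * cnj (v i)))"
    unfolding cinner_def by (simp add: algebra_simps)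
  then show ?thesis unfolding cinner_def by (simp add: infsum_cmult_right')
qed

lemma cinner_zero_left: "cinner (\<lambda>i. 0) v = 0"
  unfolding cinner_def by simp

lemma cinner_zero_right: "cinner v (\<lambda>i. 0) = 0"
  unfolding cinner_def by simp

lemma cinner_sum_left:
  assumes "finite B" "\<And>b. b \<in> B \<Longrightarrow> is_l2 (f b)" "is_l2 v"
  shows "cinner (\<lambda>i. \<Sum>b\<in>B. f b i) v = (\<Sum>b\<in>B. cinner (f b) v)"
  using assms
proof (induction B rule: finite_induct)
  case empty then show ?case by (simp add: cinner_zero_left)
next
  case (insert x F)
  then show ?case by (simp add: cinner_add_left is_l2_sum)
qed

lemma cinner_sum_right:
  assumes "finite B" "\<And>b. b \<in> B \<Longrightarrow> is_l2 (f b)" "is_l2 v"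
  shows "cinner v (\<lambda>i. \<Sum>b\<in>B. f b i) = (\<Sum>b\<in>B. cinner v (f b))"
  using assms
proof (induction B rule: finite_induct)
  case empty then show ?case by (simp add: cinner_zero_right)
next
  case (insert x F)
  then show ?case by (simp add: cinner_add_right is_l2_sum)
qed


lemma infsum_single_pt:
  fixes f :: "'b \<Rightarrow> complex"
  assumes "\<And>j. j \<noteq> a \<Longrightarrow> f j = 0"
  shows "infsum f UNIV = f a"
proof -
  have "infsum f UNIV = infsum f {a}"
    by (rule infsum_cong_neutral) (use assms in auto)
  then show ?thesis by simp
qed

lemma mat_app_scale: "mat_app A (\<lambda>j. c * v j) = (\<lambda>i. c * mat_app A v i)"
proof -
  have "\<And>i. (\<Sum>\<^sub>\<infinity>j. A i j * (c * v j)) = (\<Sum>\<^sub>\<infinity>j. c * (A i j * v j))"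
    by (simp add: algebra_simps)
  then show ?thesis unfolding mat_app_def by (simp add: infsum_cmult_right')
qed

lemma bounded_l2: "bounded_mat A \<Longrightarrow> is_l2 v \<Longrightarrow> is_l2 (mat_app A v)"
  unfolding bounded_mat_def by blast

lemma bounded_row: "bounded_mat A \<Longrightarrow> is_l2 v \<Longrightarrow> (\<lambda>j. A i j * v j) summable_on UNIV"
  unfolding bounded_mat_def by blast

lemma mat_app_add:
  assumes "bounded_mat A" "is_l2 u" "is_l2 w"
  shows "mat_app A (\<lambda>j. u j + w j) = (\<lambda>i. mat_app A u i + mat_app A w i)"
proof -
  have "\<And>i. (\<Sum>\<^sub>\<infinity>j. A i j * (u j + w j)) = (\<Sum>\<^sub>\<infinity>j. A i j * u j + A i j * w j)"
    by (simp add: algebra_simps)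
  then show ?thesis unfolding mat_app_def
    using infsum_add[OF bounded_row[OF assms(1,2)] bounded_row[OF assms(1,3)]]
    by simp
qed

lemma mat_app_zero: "mat_app A (\<lambda>j. 0) = (\<lambda>i. 0)"
  unfolding mat_app_def by simp

lemma mat_app_sum:
  assumes "bounded_mat A" "finite B" "\<And>b. b \<in> B \<Longrightarrow> is_l2 (f b)"
  shows "mat_app A (\<lambda>j. \<Sum>b\<in>B. f b j) = (\<lambda>i. \<Sum>b\<in>B. mat_app A (f b) i)"
  using assms(2,3)
proof (induction B rule: finite_induct)
  case empty then show ?case by (simp add: mat_app_zero)
next
  case (insert x F)
  have "mat_app A (\<lambda>j. \<Sum>b\<in>insert x F. f b j) = mat_app A (\<lambda>j. f x j + (\<Sum>b\<in>F. f b j))"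
    using insert by simp
  also have "\<dots> = (\<lambda>i. mat_app A (f x) i + mat_app A (\<lambda>j. \<Sum>b\<in>F. f b j) i)"
    by (rule mat_app_add) (use assms(1) insert in \<open>auto intro: is_l2_sum\<close>)
  finally show ?case using insert by simp
qed

section \<open>kernel sums\<close>

definition ksum :: "('a \<Rightarrow> 'a \<Rightarrow> ('i, 'i) mat) \<Rightarrow> nat \<Rightarrow> (nat \<Rightarrow> 'a) \<Rightarrow> (nat \<Rightarrow> 'i vec) \<Rightarrow> complex" where
  "ksum K n x e = (\<Sum>i<n. \<Sum>j<n. cinner (mat_app (K (x i) (x j)) (e j)) (e i))"

lemma pos_kernel_ksum:
  assumes "pos_kernel \<Omega> K" "\<And>k. k < n \<Longrightarrow> x k \<in> \<Omega>" "\<And>k. k < n \<Longrightarrow> is_l2 (e k)"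
  shows "0 \<le> ksum K n x e"
  using assms unfolding pos_kernel_def ksum_def Let_def less_eq_complex_def by auto

lemma pos_kernel_bounded:
  "pos_kernel \<Omega> K \<Longrightarrow> x \<in> \<Omega> \<Longrightarrow> y \<in> \<Omega> \<Longrightarrow> bounded_mat (K x y)"
  unfolding pos_kernel_def by blast

lemma sum_lessThan_add_split:
  fixes n m :: nat
  shows "(\<Sum>i<n + m. f i) = (\<Sum>i<n. f i) + (\<Sum>k<m. f (n + k))"
  by (induction m) (simp_all add: add.assoc)

lemma cs_abstract:
  fixes Q1 Q2 B B' :: complex
  assumes Q1: "0 \<le> Q1" and Q2: "0 \<le> Q2"
    and H: "\<And>t. 0 \<le> t * cnj t * Q1 + cnj t * B' + t * B + Q2"
  shows "(cmod B)\<^sup>2 \<le> Re Q1 * Re Q2"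
proof -
  have iq1: "Im Q1 = 0" and iq2: "Im Q2 = 0" and rq1: "Re Q1 \<ge> 0" and rq2: "Re Q2 \<ge> 0"
    using Q1 Q2 by (auto simp: less_eq_complex_def)
  have h1: "Im (B' + B) = 0"
    using H[of 1] iq1 iq2 by (simp add: less_eq_complex_def)
  have h2: "Re B = Re B'"
    using H[of \<i>] iq1 iq2 by (simp add: less_eq_complex_def)
  have Bc: "B' = cnj B"
    using h1 h2 by (simp add: complex_eq_iff)
  have R: "0 \<le> (cmod t)\<^sup>2 * Re Q1 + 2 * Re (t * B) + Re Q2" for t
  proof -
    have "0 \<le> Re (t * cnj t * Q1 + cnj t * B' + t * B + Q2)"
      using H[of t] by (simp add: less_eq_complex_def)
    moreover have "Re (t * cnj t * Q1) = (cmod t)\<^sup>2 * Re Q1"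
      using iq1 by (simp add: complex_mult_cnj cmod_power2)
    moreover have "Re (cnj t * B') = Re (t * B)"
      unfolding Bc by simp
    ultimately show ?thesis by (simp only: plus_complex.sel)
  qed
  show ?thesis
  proof (cases "B = 0")
    case True then show ?thesis using rq1 rq2 by simp
  next
    case False
    define \<beta> where "\<beta> = (cmod B)\<^sup>2"
    have bpos: "\<beta> > 0" using False unfolding \<beta>_def by simp
    have R2: "0 \<le> s\<^sup>2 * \<beta> * Re Q1 - 2 * s * \<beta> + Re Q2" for s :: real
    proof -
      have "(cmod (- (complex_of_real s * cnj B)))\<^sup>2 = s\<^sup>2 * \<beta>"
        unfolding \<beta>_def by (simp add: norm_mult power_mult_distrib)
      moreover have "Re (- (complex_of_real s * cnj B) * B) = - s * \<beta>"
        unfolding \<beta>_def by (simp add: mult.assoc complex_mult_cnj cmod_power2 mult.commute[of "cnj B"])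
      ultimately show ?thesis using R[of "- (complex_of_real s * cnj B)"] by simp
    qed
    show ?thesis
    proof (cases "Re Q1 = 0")
      case True
      have e: "2 * ((Re Q2 + 1) / (2 * \<beta>)) * \<beta> = Re Q2 + 1"
        using bpos by (simp add: field_simps)
      have "0 \<le> ((Re Q2 + 1) / (2 * \<beta>))\<^sup>2 * \<beta> * 0 - 2 * ((Re Q2 + 1) / (2 * \<beta>)) * \<beta> + Re Q2"
        using R2[of "(Re Q2 + 1) / (2 * \<beta>)"] True by simp
      then show ?thesis using e by simp
    next
      case False
      then have q1: "Re Q1 > 0" using rq1 by simp
      have "0 \<le> (1 / Re Q1)\<^sup>2 * \<beta> * Re Q1 - 2 * (1 / Re Q1) * \<beta> + Re Q2"
        using R2 by blast
      also have "\<dots> = Re Q2 - \<beta> / Re Q1"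
        using q1 by (simp add: field_simps power2_eq_square)
      finally have "\<beta> / Re Q1 \<le> Re Q2" by simp
      then have "\<beta> \<le> Re Q2 * Re Q1" using q1 by (simp add: divide_le_eq)
      then show ?thesis unfolding \<beta>_def by (simp add: mult.commute)
    qed
  qed
qed


lemma kernel_cs:
  assumes pk: "pos_kernel \<Omega> K"
    and x: "\<And>k. k < n \<Longrightarrow> x k \<in> \<Omega>" and e: "\<And>k. k < n \<Longrightarrow> is_l2 (e k)"
    and y: "\<And>k. k < m \<Longrightarrow> y k \<in> \<Omega>" and v: "\<And>k. k < m \<Longrightarrow> is_l2 (v k)"
  shows "(cmod (\<Sum>k<m. \<Sum>b<n. cinner (mat_app (K (y k) (x b)) (e b)) (v k)))\<^sup>2
           \<le> Re (ksum K n x e) * Re (ksum K m y v)"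
proof -
  define B where "B = (\<Sum>k<m. \<Sum>b<n. cinner (mat_app (K (y k) (x b)) (e b)) (v k))"
  define B' where "B' = (\<Sum>i<n. \<Sum>k<m. cinner (mat_app (K (x i) (y k)) (v k)) (e i))"
  have main: "0 \<le> t * cnj t * ksum K n x e + cnj t * B' + t * B + ksum K m y v" for t
  proof -
    define z where "z i = (if i < n then x i else y (i - n))" for i
    define w where "w i = (if i < n then (\<lambda>j. t * e i j) else v (i - n))" for i
    have "0 \<le> ksum K (n + m) z w"
      by (rule pos_kernel_ksum[OF pk]) (auto simp: z_def w_def x y e v is_l2_scale)
    also have "ksum K (n + m) z w = t * cnj t * ksum K n x e + cnj t * B' + t * B + ksum K m y v"
      unfolding ksum_def B_def B'_def sum_lessThan_add_split
      by (simp add: z_def w_def mat_app_scale cinner_scale_left cinner_scale_right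
          sum.distrib sum_distrib_left algebra_simps)
    finally show ?thesis .
  qed
  show ?thesis
    unfolding B_def[symmetric]
    by (rule cs_abstract[OF _ _ main]) (auto intro: pos_kernel_ksum[OF pk] x y e v)
qed


lemma mult_contraction_pos:
  fixes n :: nat and K :: "'a \<Rightarrow> 'a \<Rightarrow> ('i, 'i) mat"
  assumes pk: "pos_kernel \<Omega> K" and mc: "mult_contraction \<Omega> K \<psi>"
    and x: "\<And>k. k < n \<Longrightarrow> x k \<in> \<Omega>" and e: "\<And>k. k < n \<Longrightarrow> is_l2 (e k)"
  shows "0 \<le> (\<Sum>a<n. \<Sum>b<n. (1 - \<psi> (x a) * cnj (\<psi> (x b))) *
                 cinner (mat_app (K (x a) (x b)) (e b)) (e a))"
proof -
  define e' where "e' b = (\<lambda>j. cnj (\<psi> (x b)) * e b j)" for b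
  have e': "is_l2 (e' k)" if "k < n" for k
    unfolding e'_def using e[OF that] by (rule is_l2_scale)
  define Q where "Q = ksum K n x e"
  define P where "P = ksum K n x e'"
  have Pexp: "P = (\<Sum>a<n. \<Sum>b<n. \<psi> (x a) * cnj (\<psi> (x b)) * cinner (mat_app (K (x a) (x b)) (e b)) (e a))"
    unfolding P_def ksum_def e'_def mat_app_scale cinner_scale_left cinner_scale_right
    by (simp add: algebra_simps)
  have P0: "0 \<le> P" unfolding P_def by (rule pos_kernel_ksum[OF pk x e'])
  have Q0: "0 \<le> Q" unfolding Q_def by (rule pos_kernel_ksum[OF pk x e])
  define h where "h z = (\<lambda>i. \<Sum>b<n. mat_app (K z (x b)) (e' b) i)" for z
  define c where "c = sqrt (Re P)"
  have RP: "Re P \<ge> 0" using P0 by (simp add: less_eq_complex_def)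
  have c0: "c \<ge> 0" and c2: "c\<^sup>2 = Re P" unfolding c_def using RP by auto
  have hl2: "is_l2 (h z)" if "z \<in> \<Omega>" for z
    unfolding h_def
    by (rule is_l2_sum) (auto intro!: bounded_l2 e' pos_kernel_bounded[OF pk] that x)
  have ball: "rkhs_ball \<Omega> K c h"
    unfolding rkhs_ball_def
  proof (intro conjI ballI allI impI)
    fix z assume "z \<in> \<Omega>" then show "is_l2 (h z)" by (rule hl2)
  next
    fix m :: nat and y :: "nat \<Rightarrow> 'a" and v :: "nat \<Rightarrow> 'i vec"
    assume yv: "\<forall>k<m. y k \<in> \<Omega> \<and> is_l2 (v k)"
    have "(\<Sum>k<m. cinner (h (y k)) (v k)) = (\<Sum>k<m. \<Sum>b<n. cinner (mat_app (K (y k) (x b)) (e' b)) (v k))"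
      unfolding h_def
      by (rule sum.cong, simp, rule cinner_sum_left)
         (use yv in \<open>auto intro!: bounded_l2 e' pos_kernel_bounded[OF pk] x\<close>)
    then show "(cmod (\<Sum>k<m. cinner (h (y k)) (v k)))\<^sup>2
        \<le> c\<^sup>2 * Re (\<Sum>i<m. \<Sum>j<m. cinner (mat_app (K (y i) (y j)) (v j)) (v i))"
      using kernel_cs[OF pk x e', where m=m and y=y and v=v] yv
      unfolding c2 P_def ksum_def by auto
  qed
  have ball2: "rkhs_ball \<Omega> K c (\<lambda>z i. \<psi> z * h z i)"
    using mc c0 ball unfolding mult_contraction_def by blast
  have "(cmod (\<Sum>k<n. cinner (\<lambda>i. \<psi> (x k) * h (x k) i) (e k)))\<^sup>2 \<le> c\<^sup>2 * Re Q"
    using ball2 x e unfolding rkhs_ball_def Q_def ksum_def by blast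
  moreover have "(\<Sum>k<n. cinner (\<lambda>i. \<psi> (x k) * h (x k) i) (e k)) = P"
  proof -
    have "(\<Sum>k<n. cinner (\<lambda>i. \<psi> (x k) * h (x k) i) (e k))
        = (\<Sum>k<n. \<psi> (x k) * (\<Sum>b<n. cinner (mat_app (K (x k) (x b)) (e' b)) (e k)))"
    proof -
      have "cinner (h (x k)) (e k) = (\<Sum>b<n. cinner (mat_app (K (x k) (x b)) (e' b)) (e k))"
        if "k < n" for k
        unfolding h_def
        by (rule cinner_sum_left) (auto intro!: bounded_l2 e' pos_kernel_bounded[OF pk] x e that)
      then show ?thesis unfolding cinner_scale_left by simp
    qed
    also have "\<dots> = P"
      unfolding Pexp e'_def mat_app_scale cinner_scale_left cinner_scale_right
      by (simp add: algebra_simps sum_distrib_left)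
    finally show ?thesis .
  qed
  ultimately have "(cmod P)\<^sup>2 \<le> Re P * Re Q" using c2 by simp
  moreover have "cmod P = Re P" using P0 by (simp add: less_eq_complex_def cmod_eq_Re)
  ultimately have "(Re P)\<^sup>2 \<le> Re P * Re Q" by simp
  then have "Re P \<le> Re Q"
    using RP Q0 by (cases "Re P = 0") (auto simp: less_eq_complex_def power2_eq_square)
  then have "P \<le> Q" using P0 Q0 by (simp add: less_eq_complex_def)
  moreover have "(\<Sum>a<n. \<Sum>b<n. (1 - \<psi> (x a) * cnj (\<psi> (x b))) *
                 cinner (mat_app (K (x a) (x b)) (e b)) (e a)) = Q - P"
    unfolding Pexp Q_def ksum_def
    by (simp add: left_diff_distrib sum_subtractf)
  ultimately show ?thesis by simp
qed


section \<open>scalar kernels\<close>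

definition kmat :: "('a \<Rightarrow> 'a \<Rightarrow> complex) \<Rightarrow> ('a \<Rightarrow> 'a \<Rightarrow> (unit, unit) mat)" where
  "kmat k = (\<lambda>x y _ _. k x y)"

lemma infsum_unit: "infsum f (UNIV :: unit set) = f ()"
proof -
  have eq: "(UNIV :: unit set) = {()}" by auto
  have "infsum f (UNIV :: unit set) = sum f UNIV" by simp
  also have "\<dots> = sum f {()}" by (simp only: eq)
  finally show ?thesis by simp
qed

lemma infsum_unit2: "infsum f (UNIV :: (unit \<times> unit) set) = f ((), ())"
proof -
  have eq: "(UNIV :: (unit \<times> unit) set) = {((), ())}" by auto
  have "infsum f (UNIV :: (unit \<times> unit) set) = sum f UNIV" by simp
  also have "\<dots> = sum f {((), ())}" by (simp only: eq)
  finally show ?thesis by simp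
qed

lemma is_l2_unit: "is_l2 (v :: unit vec)"
  unfolding is_l2_def by simp

lemma is_l2_unit2: "is_l2 (v :: (unit \<times> unit) vec)"
  unfolding is_l2_def by simp

lemma bounded_mat_unit: "bounded_mat (A :: (unit, unit) mat)"
  unfolding bounded_mat_def
proof (intro exI allI impI conjI)
  fix v :: "unit vec"
  show "(\<lambda>j. A i j * v j) summable_on UNIV" for i by simp
  show "is_l2 (mat_app A v)" by (rule is_l2_unit)
  show "l2norm (mat_app A v) \<le> cmod (A () ()) * l2norm v"
    unfolding l2norm_def mat_app_def infsum_unit by (simp add: norm_mult power_mult_distrib real_sqrt_mult)
qed

lemma bounded_mat_unit2: "bounded_mat (A :: (unit \<times> unit, unit \<times> unit) mat)"
  unfolding bounded_mat_def
proof (intro exI allI impI conjI)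
  fix v :: "(unit \<times> unit) vec"
  show "(\<lambda>j. A i j * v j) summable_on UNIV" for i by simp
  show "is_l2 (mat_app A v)" by (rule is_l2_unit2)
  show "l2norm (mat_app A v) \<le> cmod (A ((),()) ((),())) * l2norm v"
    unfolding l2norm_def mat_app_def infsum_unit2 by (simp add: norm_mult power_mult_distrib real_sqrt_mult)
qed

lemma cinner_kmat: "cinner (mat_app (kmat k x y) v) w = k x y * v () * cnj (w ())"
  unfolding cinner_def mat_app_def kmat_def infsum_unit by simp

lemma kmat_admissible:
  fixes k :: "'a \<Rightarrow> 'a \<Rightarrow> complex"
  assumes pos: "\<And>(m::nat) y c. (\<forall>a<m. y a \<in> \<Omega>) \<Longrightarrow>
      0 \<le> (\<Sum>a<m. \<Sum>b<m. k (y a) (y b) * c b * cnj (c a))"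
    and mc: "\<And>\<psi> (m::nat) y c. \<psi> \<in> \<Psi> \<Longrightarrow> (\<forall>a<m. y a \<in> \<Omega>) \<Longrightarrow>
      0 \<le> (\<Sum>a<m. \<Sum>b<m. (1 - \<psi> (y a) * cnj (\<psi> (y b))) * k (y a) (y b) * c b * cnj (c a))"
  shows "kmat k \<in> admissible_kernels \<Omega> \<Psi>"
  unfolding admissible_kernels_def
proof (intro CollectI conjI ballI)
  show "pos_kernel \<Omega> (kmat k)"
    unfolding pos_kernel_def Let_def
  proof (intro conjI ballI allI impI)
    fix n :: nat and x :: "nat \<Rightarrow> 'a" and e :: "nat \<Rightarrow> unit vec"
    assume "\<forall>k<n. x k \<in> \<Omega> \<and> is_l2 (e k)"
    then have "0 \<le> (\<Sum>a<n. \<Sum>b<n. k (x a) (x b) * e b () * cnj (e a ()))"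
      using pos[of n x "\<lambda>b. e b ()"] by auto
    then show "Im (\<Sum>i<n. \<Sum>j<n. cinner (mat_app (kmat k (x i) (x j)) (e j)) (e i)) = 0"
      and "0 \<le> Re (\<Sum>i<n. \<Sum>j<n. cinner (mat_app (kmat k (x i) (x j)) (e j)) (e i))"
      unfolding cinner_kmat by (auto simp: less_eq_complex_def)
  qed (rule bounded_mat_unit)
next
  fix \<psi> assume \<psi>: "\<psi> \<in> \<Psi>"
  show "mult_contraction \<Omega> (kmat k) \<psi>"
    unfolding mult_contraction_def
  proof (intro allI impI)
    fix c :: real and f :: "'a \<Rightarrow> unit vec"
    assume c0: "c \<ge> 0" and ball: "rkhs_ball \<Omega> (kmat k) c f"
    show "rkhs_ball \<Omega> (kmat k) c (\<lambda>x i. \<psi> x * f x i)"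
      unfolding rkhs_ball_def
    proof (intro conjI ballI allI impI)
      fix m :: nat and y :: "nat \<Rightarrow> 'a" and e :: "nat \<Rightarrow> unit vec"
      assume ye: "\<forall>k<m. y k \<in> \<Omega> \<and> is_l2 (e k)"
      define e' where "e' a = (\<lambda>_::unit. cnj (\<psi> (y a)) * e a ())" for a
      have "(cmod (\<Sum>a<m. cinner (f (y a)) (e' a)))\<^sup>2 \<le>
          c\<^sup>2 * Re (\<Sum>a<m. \<Sum>b<m. cinner (mat_app (kmat k (y a) (y b)) (e' b)) (e' a))"
        using ball ye unfolding rkhs_ball_def by (auto simp: is_l2_unit)
      moreover have "(\<Sum>a<m. cinner (f (y a)) (e' a)) = (\<Sum>a<m. cinner (\<lambda>i. \<psi> (y a) * f (y a) i) (e a))"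
        unfolding cinner_def infsum_unit e'_def by (simp add: algebra_simps)
      moreover have "Re (\<Sum>a<m. \<Sum>b<m. cinner (mat_app (kmat k (y a) (y b)) (e' b)) (e' a))
          \<le> Re (\<Sum>a<m. \<Sum>b<m. cinner (mat_app (kmat k (y a) (y b)) (e b)) (e a))"
      proof -
        have "0 \<le> (\<Sum>a<m. \<Sum>b<m. (1 - \<psi> (y a) * cnj (\<psi> (y b))) * k (y a) (y b) * e b () * cnj (e a ()))"
          using mc[OF \<psi>, of m y "\<lambda>b. e b ()"] ye by auto
        also have "(\<Sum>a<m. \<Sum>b<m. (1 - \<psi> (y a) * cnj (\<psi> (y b))) * k (y a) (y b) * e b () * cnj (e a ()))
          = (\<Sum>a<m. \<Sum>b<m. cinner (mat_app (kmat k (y a) (y b)) (e b)) (e a))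
            - (\<Sum>a<m. \<Sum>b<m. cinner (mat_app (kmat k (y a) (y b)) (e' b)) (e' a))"
          unfolding cinner_kmat e'_def by (simp add: sum_subtractf algebra_simps)
        finally show ?thesis by (simp add: less_eq_complex_def)
      qed
      ultimately show "(cmod (\<Sum>a<m. cinner (\<lambda>i. \<psi> (y a) * f (y a) i) (e a)))\<^sup>2 \<le>
          c\<^sup>2 * Re (\<Sum>i<m. \<Sum>j<m. cinner (mat_app (kmat k (y i) (y j)) (e j)) (e i))"
        by (smt (verit) mult_left_mono zero_le_power2)
    qed (rule is_l2_unit)
  qed
qed


lemma cinner_scalar_tensor:
  "cinner (mat_app (mat_tensor (mat_diff (mat_scale (complex_of_real (C\<^sup>2)) id_mat)
       (mat_mult (scalar_op \<phi> x) (mat_adj (scalar_op \<phi> y)))) (kmat k x y)) (\<lambda>_. p)) (\<lambda>_. q)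
   = (complex_of_real (C\<^sup>2) - \<phi> x * cnj (\<phi> y)) * k x y * p * cnj q"
  unfolding cinner_def mat_app_def infsum_unit2 mat_tensor_def mat_diff_def mat_scale_def
    mat_mult_def mat_adj_def scalar_op_def kmat_def id_mat_def infsum_unit
  by simp

lemma scalar_pos:
  fixes \<phi> :: "'a \<Rightarrow> complex" and k :: "'a \<Rightarrow> 'a \<Rightarrow> complex" and m :: nat
  assumes sa: "scalar_op \<phi> \<in> schur_agler \<Omega> \<Psi>" and ka: "kmat k \<in> admissible_kernels \<Omega> \<Psi>"
    and y: "\<And>a. a < m \<Longrightarrow> y a \<in> \<Omega>"
  shows "0 \<le> (\<Sum>a<m. \<Sum>b<m. (1 - \<phi> (y a) * cnj (\<phi> (y b))) * k (y a) (y b) * c b * cnj (c a))"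
proof -
  define Q where "Q = (\<Sum>a<m. \<Sum>b<m. k (y a) (y b) * c b * cnj (c a))"
  define R where "R = (\<Sum>a<m. \<Sum>b<m. \<phi> (y a) * cnj (\<phi> (y b)) * k (y a) (y b) * c b * cnj (c a))"
  have pk: "pos_kernel \<Omega> (kmat k)" using ka unfolding admissible_kernels_def by blast
  have "0 \<le> ksum (kmat k) m y (\<lambda>a _. c a)"
    by (rule pos_kernel_ksum[OF pk]) (auto intro: y is_l2_unit)
  then have Q0: "0 \<le> Q" unfolding ksum_def Q_def cinner_kmat by simp
  define BB where "BB = Hinf_bounds \<Omega> \<Psi> (scalar_op \<phi>)"
  have HC: "0 \<le> complex_of_real (C\<^sup>2) * Q - R" if C: "C \<in> BB" for C
  proof -
    have pkC: "pos_kernel \<Omega> (\<lambda>x y. mat_tensor (mat_diff (mat_scale (complex_of_real (C\<^sup>2)) id_mat)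
       (mat_mult (scalar_op \<phi> x) (mat_adj (scalar_op \<phi> y)))) (kmat k x y))"
      using C ka unfolding BB_def Hinf_bounds_def by blast
    have "0 \<le> ksum (\<lambda>x y. mat_tensor (mat_diff (mat_scale (complex_of_real (C\<^sup>2)) id_mat)
       (mat_mult (scalar_op \<phi> x) (mat_adj (scalar_op \<phi> y)))) (kmat k x y)) m y (\<lambda>a _. c a)"
      by (rule pos_kernel_ksum[OF pkC]) (auto intro: y is_l2_unit2)
    also have "\<dots> = complex_of_real (C\<^sup>2) * Q - R"
      unfolding ksum_def cinner_scalar_tensor Q_def R_def
      by (simp add: sum_subtractf sum_distrib_left algebra_simps)
    finally show ?thesis .
  qed
  have ne: "BB \<noteq> {}" using sa unfolding schur_agler_def Hinf_def BB_def by blast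
  have inf1: "Inf BB \<le> 1" using sa unfolding schur_agler_def Hinf_norm_def BB_def by blast
  have bdd: "bdd_below BB" unfolding BB_def Hinf_bounds_def by (rule bdd_belowI[of _ 0]) auto
  have BB0: "C \<ge> 0" if "C \<in> BB" for C using that unfolding BB_def Hinf_bounds_def by auto
  obtain C0 where C0: "C0 \<in> BB" using ne by blast
  have iQ: "Im Q = 0" and rQ: "Re Q \<ge> 0" using Q0 by (auto simp: less_eq_complex_def)
  have iR: "Im R = 0" using HC[OF C0] iQ by (simp add: less_eq_complex_def)
  have HCr: "Re R \<le> C\<^sup>2 * Re Q" if "C \<in> BB" for C
    using HC[OF that] by (simp add: less_eq_complex_def)
  have "Re R \<le> Re Q"
  proof (rule ccontr)
    assume neg: "\<not> Re R \<le> Re Q"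
    show False
    proof (cases "Re Q = 0")
      case True then show False using HCr[OF C0] neg by simp
    next
      case False
      then have qp: "Re Q > 0" using rQ by simp
      define y0 where "y0 = sqrt (Re R / Re Q)"
      have "Re R / Re Q > 1" using neg qp by simp
      then have "y0 > 1" unfolding y0_def by simp
      then have "Inf BB < y0" using inf1 by simp
      then obtain C where C: "C \<in> BB" "C < y0" using cInf_less_iff[OF ne bdd] by blast
      have "C\<^sup>2 < y0\<^sup>2" using C BB0[OF C(1)] by (simp add: power_strict_mono)
      also have "y0\<^sup>2 = Re R / Re Q" unfolding y0_def using qp neg by simp
      finally have "C\<^sup>2 * Re Q < Re R" using qp by (simp add: pos_less_divide_eq)
      then show False using HCr[OF C(1)] by simp
    qed
  qed
  then have "0 \<le> Q - R" using iQ iR by (simp add: less_eq_complex_def)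
  also have "Q - R = (\<Sum>a<m. \<Sum>b<m. (1 - \<phi> (y a) * cnj (\<phi> (y b))) * k (y a) (y b) * c b * cnj (c a))"
    unfolding Q_def R_def by (simp add: sum_subtractf algebra_simps)
  finally show ?thesis .
qed




lemma sum_sum_prod_cnj:
  fixes f g :: "nat \<Rightarrow> complex"
  shows "(\<Sum>a<m. \<Sum>b<m. f a * g b) = (\<Sum>a<m. f a) * (\<Sum>b<m. g b)"
  by (simp add: sum_product)

lemma phi_bound:
  fixes \<phi> :: "'a \<Rightarrow> complex"
  assumes tf: "test_functions \<Omega> \<Psi>" and sa: "scalar_op \<phi> \<in> schur_agler \<Omega> \<Psi>" and x0: "x0 \<in> \<Omega>"
  shows "cmod (\<phi> x0) \<le> 1"
proof -
  define u where "u x = (if x = x0 then (1::complex) else 0)" for x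
  define k where "k x y = u x * cnj (u y)" for x y
  have sq: "(\<Sum>a<m. \<Sum>b<m. k (y a) (y b) * c b * cnj (c a)) = cnj S * S"
    if "S = (\<Sum>b<m. cnj (u (y b)) * c b)" for m :: nat and y c S
  proof -
    have "(\<Sum>a<m. \<Sum>b<m. k (y a) (y b) * c b * cnj (c a))
        = (\<Sum>a<m. \<Sum>b<m. (u (y a) * cnj (c a)) * (cnj (u (y b)) * c b))"
      unfolding k_def by (simp add: algebra_simps)
    also have "\<dots> = (\<Sum>a<m. u (y a) * cnj (c a)) * S"
      unfolding that by (rule sum_sum_prod_cnj)
    also have "(\<Sum>a<m. u (y a) * cnj (c a)) = cnj S"
      unfolding that by (simp add: u_def)
    finally show ?thesis .
  qed
  have sqpos: "0 \<le> cnj S * S" for S :: complex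
  proof -
    have "cnj S * S = complex_of_real ((cmod S)\<^sup>2)"
      by (subst mult.commute) (rule complex_norm_square[symmetric])
    then show ?thesis by (simp add: less_eq_complex_def)
  qed
  have h1: "0 \<le> (\<Sum>a<m. \<Sum>b<m. k (y a) (y b) * c b * cnj (c a))" for m :: nat and y c
  proof -
    have e: "(\<Sum>a<m. \<Sum>b<m. k (y a) (y b) * c b * cnj (c a))
        = cnj (\<Sum>b<m. cnj (u (y b)) * c b) * (\<Sum>b<m. cnj (u (y b)) * c b)"
      by (rule sq) (rule refl)
    show ?thesis unfolding e by (rule sqpos)
  qed
  have h2: "0 \<le> (\<Sum>a<m. \<Sum>b<m. (1 - \<psi> (y a) * cnj (\<psi> (y b))) * k (y a) (y b) * c b * cnj (c a))"
    if \<psi>: "\<psi> \<in> \<Psi>" for \<psi> and m :: nat and y c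
  proof -
    obtain r where r: "r < 1" "\<forall>\<psi>\<in>\<Psi>. cmod (\<psi> x0) \<le> r"
    proof -
      have "\<forall>x\<in>\<Omega>. \<exists>r<1. \<forall>\<psi>\<in>\<Psi>. cmod (\<psi> x) \<le> r"
        using tf unfolding test_functions_def by (rule conjunct1)
      then show ?thesis using x0 that by blast
    qed
    have p1: "cmod (\<psi> x0) < 1" using r \<psi> by fastforce
    have "(\<Sum>a<m. \<Sum>b<m. (1 - \<psi> (y a) * cnj (\<psi> (y b))) * k (y a) (y b) * c b * cnj (c a))
        = (\<Sum>a<m. \<Sum>b<m. (1 - \<psi> x0 * cnj (\<psi> x0)) * (k (y a) (y b) * c b * cnj (c a)))"
    proof -
      have "(1 - \<psi> (y a) * cnj (\<psi> (y b))) * k (y a) (y b) * c b * cnj (c a)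
          = (1 - \<psi> x0 * cnj (\<psi> x0)) * (k (y a) (y b) * c b * cnj (c a))" for a b
        unfolding k_def u_def by (cases "y a = x0"; cases "y b = x0") simp_all
      then show ?thesis by (simp only:)
    qed
    also have "\<dots> = (1 - \<psi> x0 * cnj (\<psi> x0)) * (\<Sum>a<m. \<Sum>b<m. k (y a) (y b) * c b * cnj (c a))"
      by (simp add: sum_distrib_left)
    finally have eq: "(\<Sum>a<m. \<Sum>b<m. (1 - \<psi> (y a) * cnj (\<psi> (y b))) * k (y a) (y b) * c b * cnj (c a))
        = (1 - \<psi> x0 * cnj (\<psi> x0)) * (\<Sum>a<m. \<Sum>b<m. k (y a) (y b) * c b * cnj (c a))" .
    have "0 \<le> 1 - \<psi> x0 * cnj (\<psi> x0)"
    proof -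
      have "\<psi> x0 * cnj (\<psi> x0) = complex_of_real ((cmod (\<psi> x0))\<^sup>2)" by (rule complex_norm_square[symmetric])
      moreover have "(cmod (\<psi> x0))\<^sup>2 \<le> 1" using p1 by (simp add: abs_square_le_1)
      ultimately show ?thesis by (simp add: less_eq_complex_def)
    qed
    then show ?thesis unfolding eq by (rule mult_nonneg_nonneg) (rule h1)
  qed
  have ka: "kmat k \<in> admissible_kernels \<Omega> \<Psi>"
    by (rule kmat_admissible) (rule h1, rule h2)
  have "0 \<le> (\<Sum>a<(1::nat). \<Sum>b<(1::nat). (1 - \<phi> x0 * cnj (\<phi> x0)) * k x0 x0 * 1 * cnj 1)"
    using scalar_pos[OF sa ka, where m=1 and y="\<lambda>_. x0" and c="\<lambda>_. 1"] x0 by simp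
  then have "0 \<le> 1 - \<phi> x0 * cnj (\<phi> x0)" by (simp add: k_def u_def)
  moreover have "\<phi> x0 * cnj (\<phi> x0) = complex_of_real ((cmod (\<phi> x0))\<^sup>2)" by (rule complex_norm_square[symmetric])
  ultimately have "(cmod (\<phi> x0))\<^sup>2 \<le> 1" by (simp add: less_eq_complex_def)
  then show ?thesis by (simp add: power_le_one_iff abs_square_le_1)
qed


lemma induced_admissible:
  fixes K :: "'a \<Rightarrow> 'a \<Rightarrow> ('i, 'i) mat" and u :: "'a \<Rightarrow> 'i vec"
  assumes Ka: "K \<in> admissible_kernels \<Omega> \<Psi>" and u: "\<And>x. is_l2 (u x)"
  shows "kmat (\<lambda>x y. cinner (mat_app (K x y) (u y)) (u x)) \<in> admissible_kernels \<Omega> \<Psi>"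
proof -
  have pk: "pos_kernel \<Omega> K" using Ka unfolding admissible_kernels_def by blast
  have mc: "\<And>\<psi>. \<psi> \<in> \<Psi> \<Longrightarrow> mult_contraction \<Omega> K \<psi>" using Ka unfolding admissible_kernels_def by blast
  define k where "k x y = cinner (mat_app (K x y) (u y)) (u x)" for x y
  have ex: "(\<Sum>a<m. \<Sum>b<m. f a b * k (y a) (y b) * c b * cnj (c a))
      = (\<Sum>a<m. \<Sum>b<m. f a b * cinner (mat_app (K (y a) (y b)) (\<lambda>j. c b * u (y b) j)) (\<lambda>j. c a * u (y a) j))"
    for m :: nat and y c and f :: "nat \<Rightarrow> nat \<Rightarrow> complex"
    unfolding k_def mat_app_scale cinner_scale_left cinner_scale_right by (simp add: algebra_simps)
  have h1: "0 \<le> (\<Sum>a<m. \<Sum>b<m. k (y a) (y b) * c b * cnj (c a))"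
    if "\<forall>a<m. y a \<in> \<Omega>" for m :: nat and y c
  proof -
    have "0 \<le> ksum K m y (\<lambda>a j. c a * u (y a) j)"
      by (rule pos_kernel_ksum[OF pk]) (use that in \<open>auto intro: is_l2_scale u\<close>)
    then show ?thesis using ex[where f="\<lambda>_ _. 1"] unfolding ksum_def by simp
  qed
  have h2: "0 \<le> (\<Sum>a<m. \<Sum>b<m. (1 - \<psi> (y a) * cnj (\<psi> (y b))) * k (y a) (y b) * c b * cnj (c a))"
    if "\<psi> \<in> \<Psi>" "\<forall>a<m. y a \<in> \<Omega>" for \<psi> and m :: nat and y c
  proof -
    have "0 \<le> (\<Sum>a<m. \<Sum>b<m. (1 - \<psi> (y a) * cnj (\<psi> (y b))) *
                 cinner (mat_app (K (y a) (y b)) (\<lambda>j. c b * u (y b) j)) (\<lambda>j. c a * u (y a) j))"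
      by (rule mult_contraction_pos[OF pk mc[OF that(1)]]) (use that in \<open>auto intro: is_l2_scale u\<close>)
    then show ?thesis using ex[where f="\<lambda>a b. 1 - \<psi> (y a) * cnj (\<psi> (y b))"] by simp
  qed
  show ?thesis
    unfolding k_def[symmetric]
    by (rule kmat_admissible) (rule h1, assumption, rule h2)
qed

lemma diag_pos:
  fixes K :: "'a \<Rightarrow> 'a \<Rightarrow> ('i, 'i) mat" and n :: nat and \<phi> :: "'a \<Rightarrow> complex"
  assumes sa: "scalar_op \<phi> \<in> schur_agler \<Omega> \<Psi>" and Ka: "K \<in> admissible_kernels \<Omega> \<Psi>"
    and x: "\<And>a. a < n \<Longrightarrow> x a \<in> \<Omega>" and w: "\<And>a. a < n \<Longrightarrow> is_l2 (w a)"
  shows "0 \<le> (\<Sum>a<n. \<Sum>b<n. (1 - \<phi> (x a) * cnj (\<phi> (x b))) *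
              cinner (mat_app (K (x a) (x b)) (w b)) (w a))"
proof -
  have pk: "pos_kernel \<Omega> K" using Ka unfolding admissible_kernels_def by blast
  define P where "P = x ` {..<n}"
  have fP: "finite P" unfolding P_def by simp
  have PO: "p \<in> \<Omega>" if "p \<in> P" for p using that x unfolding P_def by auto
  obtain ps where ps: "set ps = P" "distinct ps" using finite_distinct_list[OF fP] by blast
  define A where "A p = {a \<in> {..<n}. x a = p}" for p
  have fA: "finite (A p)" for p unfolding A_def by simp
  have Aw: "a \<in> A p \<Longrightarrow> is_l2 (w a)" for a p unfolding A_def using w by auto
  have Ax: "a \<in> A p \<Longrightarrow> x a = p" for a p unfolding A_def by auto
  define W where "W p = (\<lambda>j. \<Sum>a\<in>A p. w a j)" for p
  have Wl2: "is_l2 (W p)" for p unfolding W_def by (rule is_l2_sum[OF fA Aw])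
  define k where "k p q = cinner (mat_app (K p q) (W q)) (W p)" for p q
  have ka: "kmat k \<in> admissible_kernels \<Omega> \<Psi>"
    unfolding k_def by (rule induced_admissible[OF Ka Wl2])
  define G where "G a b = (1 - \<phi> (x a) * cnj (\<phi> (x b))) * cinner (mat_app (K (x a) (x b)) (w b)) (w a)" for a b
  have kexp: "k p q = (\<Sum>a\<in>A p. \<Sum>b\<in>A q. cinner (mat_app (K p q) (w b)) (w a))"
    if "p \<in> P" "q \<in> P" for p q
  proof -
    have bd: "bounded_mat (K p q)" using pos_kernel_bounded[OF pk PO[OF that(1)] PO[OF that(2)]] .
    have "k p q = cinner (\<lambda>i. \<Sum>b\<in>A q. mat_app (K p q) (w b) i) (W p)"
      unfolding k_def W_def by (subst mat_app_sum[OF bd fA Aw]) (auto simp: W_def)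
    also have "\<dots> = (\<Sum>b\<in>A q. cinner (mat_app (K p q) (w b)) (W p))"
      by (rule cinner_sum_left[OF fA]) (auto intro: bounded_l2[OF bd] Aw Wl2)
    also have "\<dots> = (\<Sum>b\<in>A q. \<Sum>a\<in>A p. cinner (mat_app (K p q) (w b)) (w a))"
      unfolding W_def
      by (rule sum.cong[OF refl], rule cinner_sum_right[OF fA]) (auto intro: bounded_l2[OF bd] Aw)
    also have "\<dots> = (\<Sum>a\<in>A p. \<Sum>b\<in>A q. cinner (mat_app (K p q) (w b)) (w a))"
      by (rule sum.swap)
    finally show ?thesis .
  qed
  have "0 \<le> (\<Sum>i<length ps. \<Sum>j<length ps. (1 - \<phi> (ps ! i) * cnj (\<phi> (ps ! j))) * k (ps ! i) (ps ! j)
             * (\<lambda>_. 1) j * cnj ((\<lambda>_. 1) i))"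
    by (rule scalar_pos[OF sa ka]) (use ps PO in auto)
  also have "\<dots> = (\<Sum>i<length ps. \<Sum>j<length ps. (1 - \<phi> (ps ! i) * cnj (\<phi> (ps ! j))) * k (ps ! i) (ps ! j))"
    by simp
  also have "\<dots> = (\<Sum>p\<in>P. \<Sum>q\<in>P. (1 - \<phi> p * cnj (\<phi> q)) * k p q)"
  proof -
    have bij: "bij_betw ((!) ps) {..<length ps} P"
      by (rule bij_betw_nth) (use ps in auto)
    have r: "(\<Sum>i<length ps. g (ps ! i)) = (\<Sum>p\<in>P. g p)" for g :: "'a \<Rightarrow> complex"
      using sum.reindex_bij_betw[OF bij, of g] by simp
    define F where "F p q = (1 - \<phi> p * cnj (\<phi> q)) * k p q" for p q
    have "(\<Sum>i<length ps. \<Sum>j<length ps. F (ps ! i) (ps ! j)) = (\<Sum>i<length ps. \<Sum>q\<in>P. F (ps ! i) q)"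
      by (rule sum.cong[OF refl], rule r)
    also have "\<dots> = (\<Sum>p\<in>P. \<Sum>q\<in>P. F p q)" by (rule r)
    finally show ?thesis unfolding F_def .
  qed
  also have "\<dots> = (\<Sum>p\<in>P. \<Sum>q\<in>P. \<Sum>a\<in>A p. \<Sum>b\<in>A q. G a b)"
  proof (intro sum.cong refl)
    fix p q assume pq: "p \<in> P" "q \<in> P"
    show "(1 - \<phi> p * cnj (\<phi> q)) * k p q = (\<Sum>a\<in>A p. \<Sum>b\<in>A q. G a b)"
      unfolding kexp[OF pq] sum_distrib_left G_def
      by (intro sum.cong refl) (simp add: Ax)
  qed
  also have "\<dots> = (\<Sum>p\<in>P. \<Sum>a\<in>A p. \<Sum>q\<in>P. \<Sum>b\<in>A q. G a b)"
    by (rule sum.cong[OF refl], rule sum.swap)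
  also have "\<dots> = (\<Sum>a<n. \<Sum>b<n. G a b)"
  proof -
    have grp: "(\<Sum>p\<in>P. \<Sum>a\<in>A p. f a) = (\<Sum>a<n. f a)" for f :: "nat \<Rightarrow> complex"
      unfolding A_def by (rule sum.group) (auto simp: P_def)
    show ?thesis by (simp only: grp)
  qed
  finally show ?thesis unfolding G_def .
qed


lemma summable_finsum:
  fixes f :: "'b \<Rightarrow> 'a \<Rightarrow> complex"
  assumes "finite B" "\<And>b. b \<in> B \<Longrightarrow> f b summable_on A"
  shows "(\<lambda>x. \<Sum>b\<in>B. f b x) summable_on A"
  using assms by (induction B rule: finite_induct) (auto intro: summable_on_add)

lemma infsum_finsum:
  fixes f :: "'b \<Rightarrow> 'a \<Rightarrow> complex"
  assumes "finite B" "\<And>b. b \<in> B \<Longrightarrow> f b summable_on A"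
  shows "infsum (\<lambda>x. \<Sum>b\<in>B. f b x) A = (\<Sum>b\<in>B. infsum (f b) A)"
  using assms
proof (induction B rule: finite_induct)
  case empty then show ?case by simp
next
  case (insert y F)
  have "infsum (\<lambda>x. \<Sum>b\<in>insert y F. f b x) A = infsum (\<lambda>x. f y x + (\<Sum>b\<in>F. f b x)) A"
    using insert by simp
  also have "\<dots> = infsum (f y) A + infsum (\<lambda>x. \<Sum>b\<in>F. f b x) A"
    by (rule infsum_add) (use insert in \<open>auto intro: summable_finsum\<close>)
  finally show ?case using insert by simp
qed

section \<open>slices and tensor products\<close>

lemma l2_slice:
  fixes v :: "('k \<times> 'i) vec"
  assumes "is_l2 v"
  shows "is_l2 (\<lambda>j. v (i, j))"
proof -
  have "(\<lambda>p. (cmod (v p))\<^sup>2) summable_on (Pair i ` UNIV)"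
    using assms unfolding is_l2_def by (rule summable_on_subset) auto
  then show ?thesis
    unfolding is_l2_def using summable_on_reindex[of "Pair i" UNIV "\<lambda>p. (cmod (v p))\<^sup>2"]
    by (simp add: o_def inj_on_def)
qed

lemma l2_iter:
  fixes v :: "('k \<times> 'i) vec"
  assumes "is_l2 v"
  shows "(\<lambda>i. \<Sum>\<^sub>\<infinity>j. (cmod (v (i, j)))\<^sup>2) summable_on UNIV"
    and "(\<Sum>\<^sub>\<infinity>i. \<Sum>\<^sub>\<infinity>j. (cmod (v (i, j)))\<^sup>2) = (\<Sum>\<^sub>\<infinity>p. (cmod (v p))\<^sup>2)"
proof -
  have e: "(\<lambda>(i, j). (cmod (v (i, j)))\<^sup>2) = (\<lambda>p. (cmod (v p))\<^sup>2)" by (auto simp: fun_eq_iff)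
  have s: "(\<lambda>(i, j). (cmod (v (i, j)))\<^sup>2) summable_on Sigma UNIV (\<lambda>_. UNIV)"
    using assms unfolding is_l2_def e by simp
  show "(\<lambda>i. \<Sum>\<^sub>\<infinity>j. (cmod (v (i, j)))\<^sup>2) summable_on UNIV"
    using summable_on_Sigma_banach[OF s] by simp
  show "(\<Sum>\<^sub>\<infinity>i. \<Sum>\<^sub>\<infinity>j. (cmod (v (i, j)))\<^sup>2) = (\<Sum>\<^sub>\<infinity>p. (cmod (v p))\<^sup>2)"
    using infsum_Sigma'_banach[OF s] unfolding e by simp
qed

lemma l2norm_sq: "(l2norm v)\<^sup>2 = (\<Sum>\<^sub>\<infinity>i. (cmod (v i))\<^sup>2)"
  unfolding l2norm_def by (simp add: infsum_nonneg)

definition dmat :: "('k \<Rightarrow> complex) \<Rightarrow> ('k, 'k) mat" where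
  "dmat d = (\<lambda>i j. if i = j then d i else 0)"

lemma tensor_row:
  fixes A :: "('i, 'i) mat" and v :: "('k \<times> 'i) vec"
  shows "(\<lambda>p. mat_tensor (dmat d) A (i, i') p * v p) summable_on UNIV
           \<longleftrightarrow> (\<lambda>j. d i * A i' j * v (i, j)) summable_on UNIV"
    and "mat_app (mat_tensor (dmat d) A) v (i, i') = d i * mat_app A (\<lambda>j. v (i, j)) i'"
proof -
  define f where "f p = mat_tensor (dmat d) A (i, i') p * v p" for p
  have z: "f p = 0" if "p \<notin> Pair i ` UNIV" for p
    using that unfolding f_def mat_tensor_def dmat_def by (cases p) auto
  have s1: "f summable_on UNIV \<longleftrightarrow> f summable_on (Pair i ` UNIV)"
    by (rule summable_on_cong_neutral) (use z in auto)
  have i1: "infsum f UNIV = infsum f (Pair i ` UNIV)"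
    by (rule infsum_cong_neutral) (use z in auto)
  have fo: "f \<circ> Pair i = (\<lambda>j. d i * A i' j * v (i, j))"
    unfolding f_def mat_tensor_def dmat_def by auto
  show "(\<lambda>p. mat_tensor (dmat d) A (i, i') p * v p) summable_on UNIV
           \<longleftrightarrow> (\<lambda>j. d i * A i' j * v (i, j)) summable_on UNIV"
    using s1 summable_on_reindex[of "Pair i" UNIV f] unfolding fo by (simp add: f_def[abs_def] inj_on_def)
  have "mat_app (mat_tensor (dmat d) A) v (i, i') = infsum f UNIV"
    unfolding mat_app_def f_def by simp
  also have "\<dots> = infsum (f \<circ> Pair i) UNIV"
    unfolding i1 by (rule infsum_reindex) (simp add: inj_on_def)
  also have "\<dots> = (\<Sum>\<^sub>\<infinity>j. d i * (A i' j * v (i, j)))"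
    unfolding fo by (simp add: mult.assoc)
  also have "\<dots> = d i * mat_app A (\<lambda>j. v (i, j)) i'"
    unfolding mat_app_def by (rule infsum_cmult_right')
  finally show "mat_app (mat_tensor (dmat d) A) v (i, i') = d i * mat_app A (\<lambda>j. v (i, j)) i'" .
qed

lemma bounded_tensor_diag:
  fixes A :: "('i, 'i) mat" and d :: "'k \<Rightarrow> complex"
  assumes bA: "bounded_mat A" and dM: "\<And>i. cmod (d i) \<le> M"
  shows "bounded_mat (mat_tensor (dmat d) A)"
proof -
  obtain C where C: "\<And>v. is_l2 v \<Longrightarrow> l2norm (mat_app A v) \<le> C * l2norm v"
    using bA unfolding bounded_mat_def by blast
  have M0: "M \<ge> 0" using dM[of undefined] norm_ge_zero[of "d undefined"] by linarith
  show ?thesis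
    unfolding bounded_mat_def
  proof (intro exI[of _ "M * \<bar>C\<bar>"] allI impI conjI)
    fix v :: "('k \<times> 'i) vec" assume v: "is_l2 v"
    define vs where "vs i = (\<lambda>j. v (i, j))" for i
    have vs: "is_l2 (vs i)" for i unfolding vs_def by (rule l2_slice[OF v])
    show "(\<lambda>p. mat_tensor (dmat d) A q p * v p) summable_on UNIV" for q
    proof (cases q)
      case (Pair i i')
      have "(\<lambda>j. d i * (A i' j * v (i, j))) summable_on UNIV"
        by (rule summable_on_cmult_right, rule bounded_row[OF bA vs[of i, unfolded vs_def]])
      then show ?thesis unfolding Pair tensor_row(1) by (simp add: mult.assoc)
    qed
    have app: "mat_app (mat_tensor (dmat d) A) v = (\<lambda>(i, i'). d i * mat_app A (vs i) i')"
      by (auto simp: tensor_row(2) vs_def)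
    define g where "g i = (cmod (d i))\<^sup>2 * (\<Sum>\<^sub>\<infinity>i'. (cmod (mat_app A (vs i) i'))\<^sup>2)" for i
    define h where "h i = (\<Sum>\<^sub>\<infinity>j. (cmod (v (i, j)))\<^sup>2)" for i
    have hs: "h summable_on UNIV" unfolding h_def by (rule l2_iter(1)[OF v])
    have hsum: "infsum h UNIV = (l2norm v)\<^sup>2" unfolding h_def l2norm_sq by (rule l2_iter(2)[OF v])
    have hv: "h i = (l2norm (vs i))\<^sup>2" for i unfolding h_def l2norm_sq vs_def by simp
    have rows: "((\<lambda>i'. (cmod (d i))\<^sup>2 * (cmod (mat_app A (vs i) i'))\<^sup>2) has_sum g i) UNIV" for i
    proof -
      have "(\<lambda>i'. (cmod (mat_app A (vs i) i'))\<^sup>2) summable_on UNIV"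
        using bounded_l2[OF bA vs] unfolding is_l2_def .
      then show ?thesis unfolding g_def
        by (intro has_sum_cmult_right) (simp add: summable_iff_has_sum_infsum[symmetric])
    qed
    have gle: "g i \<le> (M * \<bar>C\<bar>)\<^sup>2 * h i" for i
    proof -
      have a: "0 \<le> l2norm (mat_app A (vs i))" unfolding l2norm_def by (simp add: infsum_nonneg)
      have "(l2norm (mat_app A (vs i)))\<^sup>2 \<le> (C * l2norm (vs i))\<^sup>2"
        using C[OF vs] a by (intro power_mono) auto
      also have "\<dots> = C\<^sup>2 * h i" unfolding hv by (simp add: power_mult_distrib)
      finally have b: "(l2norm (mat_app A (vs i)))\<^sup>2 \<le> C\<^sup>2 * h i" .
      have c: "(cmod (d i))\<^sup>2 \<le> M\<^sup>2" using dM[of i] by (intro power_mono) auto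
      have "g i = (cmod (d i))\<^sup>2 * (l2norm (mat_app A (vs i)))\<^sup>2" unfolding g_def l2norm_sq ..
      also have "\<dots> \<le> M\<^sup>2 * (C\<^sup>2 * h i)"
        using b c by (intro mult_mono) (auto intro: infsum_nonneg)
      finally show ?thesis by (simp add: power_mult_distrib)
    qed
    have g0: "g i \<ge> 0" for i unfolding g_def by (intro mult_nonneg_nonneg infsum_nonneg) auto
    have gs: "g summable_on UNIV"
      by (rule summable_on_comparison_test[OF summable_on_cmult_right[OF hs]]) (use gle g0 in auto)
    have sig: "(\<lambda>(i, i'). (cmod (d i))\<^sup>2 * (cmod (mat_app A (vs i) i'))\<^sup>2) summable_on Sigma UNIV (\<lambda>_. UNIV)"
      by (rule summable_on_SigmaI[OF _ gs]) (use rows in auto)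
    have sq: "(\<lambda>p. (cmod (mat_app (mat_tensor (dmat d) A) v p))\<^sup>2)
        = (\<lambda>(i, i'). (cmod (d i))\<^sup>2 * (cmod (mat_app A (vs i) i'))\<^sup>2)"
      unfolding app by (auto simp: norm_mult power_mult_distrib)
    show l2: "is_l2 (mat_app (mat_tensor (dmat d) A) v)"
      unfolding is_l2_def sq using sig by simp
    have "(l2norm (mat_app (mat_tensor (dmat d) A) v))\<^sup>2
        = (\<Sum>\<^sub>\<infinity>p\<in>Sigma UNIV (\<lambda>_. UNIV). (\<lambda>(i, i'). (cmod (d i))\<^sup>2 * (cmod (mat_app A (vs i) i'))\<^sup>2) p)"
      unfolding l2norm_sq sq by simp
    also have "\<dots> = (\<Sum>\<^sub>\<infinity>i. \<Sum>\<^sub>\<infinity>i'. (cmod (d i))\<^sup>2 * (cmod (mat_app A (vs i) i'))\<^sup>2)"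
      using infsum_Sigma'_banach[OF sig] by simp
    also have "\<dots> = infsum g UNIV"
      using rows by (intro infsum_cong) (simp add: infsumI)
    also have "\<dots> \<le> infsum (\<lambda>i. (M * \<bar>C\<bar>)\<^sup>2 * h i) UNIV"
      by (rule infsum_mono[OF gs summable_on_cmult_right[OF hs]]) (rule gle)
    also have "\<dots> = (M * \<bar>C\<bar> * l2norm v)\<^sup>2"
      by (simp add: infsum_cmult_right' hsum power_mult_distrib)
    finally have "(l2norm (mat_app (mat_tensor (dmat d) A) v))\<^sup>2 \<le> (M * \<bar>C\<bar> * l2norm v)\<^sup>2" .
    moreover have "0 \<le> M * \<bar>C\<bar> * l2norm v" using M0 unfolding l2norm_def by (intro mult_nonneg_nonneg real_sqrt_ge_zero infsum_nonneg) auto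
    ultimately show "l2norm (mat_app (mat_tensor (dmat d) A) v) \<le> M * \<bar>C\<bar> * l2norm v"
      by (rule power2_le_imp_le)
  qed
qed


lemma tensor_cinner:
  fixes A :: "('i, 'i) mat" and d :: "'k \<Rightarrow> complex" and u v :: "('k \<times> 'i) vec"
  assumes bT: "bounded_mat (mat_tensor (dmat d) A)" and u: "is_l2 u" and v: "is_l2 v"
  shows "(\<lambda>i. d i * cinner (mat_app A (\<lambda>j. u (i, j))) (\<lambda>j. v (i, j))) summable_on UNIV"
    and "cinner (mat_app (mat_tensor (dmat d) A) u) v
           = (\<Sum>\<^sub>\<infinity>i. d i * cinner (mat_app A (\<lambda>j. u (i, j))) (\<lambda>j. v (i, j)))"
proof -
  define F where "F p = mat_app (mat_tensor (dmat d) A) u p * cnj (v p)" for p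
  have Fs: "F summable_on UNIV"
    unfolding F_def by (rule l2_prod_summable[OF bounded_l2[OF bT u] is_l2_cnj[OF v]])
  have e: "(\<lambda>(i, j). F (i, j)) = F" by (auto simp: fun_eq_iff)
  have s: "(\<lambda>(i, j). F (i, j)) summable_on Sigma UNIV (\<lambda>_. UNIV)"
    unfolding e using Fs by simp
  have inner: "(\<Sum>\<^sub>\<infinity>j. F (i, j)) = d i * cinner (mat_app A (\<lambda>j. u (i, j))) (\<lambda>j. v (i, j))" for i
  proof -
    have "(\<Sum>\<^sub>\<infinity>j. F (i, j)) = (\<Sum>\<^sub>\<infinity>j. d i * (mat_app A (\<lambda>j. u (i, j)) j * cnj (v (i, j))))"
      unfolding F_def tensor_row(2) by (simp add: mult.assoc)
    also have "\<dots> = d i * cinner (mat_app A (\<lambda>j. u (i, j))) (\<lambda>j. v (i, j))"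
      unfolding cinner_def by (rule infsum_cmult_right')
    finally show ?thesis .
  qed
  show "(\<lambda>i. d i * cinner (mat_app A (\<lambda>j. u (i, j))) (\<lambda>j. v (i, j))) summable_on UNIV"
    using summable_on_Sigma_banach[OF s] unfolding inner .
  have "cinner (mat_app (mat_tensor (dmat d) A) u) v = infsum F UNIV"
    unfolding cinner_def F_def ..
  also have "\<dots> = (\<Sum>\<^sub>\<infinity>i. \<Sum>\<^sub>\<infinity>j. F (i, j))"
    using infsum_Sigma'_banach[OF s] unfolding e by simp
  finally show "cinner (mat_app (mat_tensor (dmat d) A) u) v
           = (\<Sum>\<^sub>\<infinity>i. d i * cinner (mat_app A (\<lambda>j. u (i, j))) (\<lambda>j. v (i, j)))"
    unfolding inner .
qed

lemma bounded_diag: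
  fixes d :: "'k \<Rightarrow> complex"
  assumes "\<And>i. cmod (d i) \<le> 1"
  shows "bounded_mat (dmat d)"
  unfolding bounded_mat_def
proof (intro exI[of _ 1] allI impI conjI)
  fix v :: "'k vec" assume v: "is_l2 v"
  have app: "mat_app (dmat d) v = (\<lambda>i. d i * v i)"
  proof
    fix i
    show "mat_app (dmat d) v i = d i * v i"
      unfolding mat_app_def dmat_def by (subst infsum_single_pt[where a=i]) auto
  qed
  show "(\<lambda>j. dmat d i j * v j) summable_on UNIV" for i
  proof -
    have "(\<lambda>j. dmat d i j * v j) summable_on UNIV \<longleftrightarrow> (\<lambda>j. dmat d i j * v j) summable_on {i}"
      by (rule summable_on_cong_neutral) (auto simp: dmat_def)
    then show ?thesis by simp
  qed
  have le: "(cmod (d i * v i))\<^sup>2 \<le> (cmod (v i))\<^sup>2" for i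
  proof -
    have "cmod (d i * v i) \<le> cmod (v i)"
      using assms[of i] by (simp add: norm_mult mult_left_le_one_le)
    then show ?thesis by (intro power_mono) auto
  qed
  have s: "(\<lambda>i. (cmod (d i * v i))\<^sup>2) summable_on UNIV"
    using v unfolding is_l2_def by (rule summable_on_comparison_test) (use le in auto)
  show "is_l2 (mat_app (dmat d) v)" unfolding app is_l2_def by (rule s)
  show "l2norm (mat_app (dmat d) v) \<le> 1 * l2norm v"
    unfolding app l2norm_def
    using infsum_mono[OF s v[unfolded is_l2_def] le] by simp
qed


lemma mat_app_dmat: "mat_app (dmat d) v = (\<lambda>i. d i * v i)"
proof
  fix i
  show "mat_app (dmat d) v i = d i * v i"
    unfolding mat_app_def dmat_def by (subst infsum_single_pt[where a=i]) auto
qed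

lemma D_eq:
  "mat_diff (mat_scale (complex_of_real (1\<^sup>2)) id_mat) (mat_mult (dmat dx) (mat_adj (dmat dy)))
     = dmat (\<lambda>i. 1 - dx i * cnj (dy i))"
proof (intro ext)
  fix i k
  have "mat_mult (dmat dx) (mat_adj (dmat dy)) i k = dx i * cnj (dmat dy k i)"
    unfolding mat_mult_def mat_adj_def by (subst infsum_single_pt[where a=i]) (auto simp: dmat_def)
  then show "mat_diff (mat_scale (complex_of_real (1\<^sup>2)) id_mat) (mat_mult (dmat dx) (mat_adj (dmat dy))) i k
     = dmat (\<lambda>i. 1 - dx i * cnj (dy i)) i k"
    unfolding mat_diff_def mat_scale_def id_mat_def by (auto simp: dmat_def)
qed

lemma basis_entry:
  "cinner (mat_app (dmat d) (std_basis i)) (std_basis j) = (if i = j then d i else 0)"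
  unfolding mat_app_dmat cinner_def std_basis_def
  by (subst infsum_single_pt[where a=i]) auto

theorem lemma3p3:
  fixes \<Omega> :: "(complex ^ 'n) set"
    and \<Psi> :: "(complex ^ 'n \<Rightarrow> complex) set"
    and \<phi> :: "nat \<Rightarrow> complex ^ 'n \<Rightarrow> complex"
  assumes "open \<Omega>" and "connected \<Omega>" and "bounded \<Omega>"
    and "test_functions \<Omega> \<Psi>"
    and "\<forall>n. scalar_op (\<phi> n) \<in> schur_agler \<Omega> \<Psi>"
  shows "\<exists>\<Phi> :: complex ^ 'n \<Rightarrow> (nat, nat) mat.
           \<Phi> \<in> schur_agler \<Omega> \<Psi> \<and>
           (\<forall>i j. \<forall>z\<in>\<Omega>. cinner (mat_app (\<Phi> z) (std_basis i)) (std_basis j)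
                          = (if i = j then \<phi> i z else 0))"
proof -
  note tf = assms(4)
  have sa: "scalar_op (\<phi> i) \<in> schur_agler \<Omega> \<Psi>" for i using assms(5) by blast
  define \<Phi> where "\<Phi> z = dmat (\<lambda>i. \<phi> i z)" for z
  have bnd: "cmod (\<phi> i z) \<le> 1" if "z \<in> \<Omega>" for i z by (rule phi_bound[OF tf sa that])
  have B1: "bounded_mat (\<Phi> x)" if "x \<in> \<Omega>" for x
    unfolding \<Phi>_def by (rule bounded_diag) (rule bnd[OF that])
  have one: "1 \<in> Hinf_bounds \<Omega> \<Psi> \<Phi>"
    unfolding Hinf_bounds_def
  proof (intro CollectI conjI ballI)
    fix K :: "complex ^ 'n \<Rightarrow> complex ^ 'n \<Rightarrow> (nat, nat) mat"
    assume Ka: "K \<in> admissible_kernels \<Omega> \<Psi>"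
    have pk: "pos_kernel \<Omega> K" using Ka unfolding admissible_kernels_def by blast
    define d where "d x y = (\<lambda>i. 1 - \<phi> i x * cnj (\<phi> i y))" for x y
    have Deq: "mat_diff (mat_scale (complex_of_real (1\<^sup>2)) id_mat) (mat_mult (\<Phi> x) (mat_adj (\<Phi> y)))
        = dmat (d x y)" for x y
      unfolding \<Phi>_def d_def by (rule D_eq)
    have bT: "bounded_mat (mat_tensor (dmat (d x y)) (K x y))" if "x \<in> \<Omega>" "y \<in> \<Omega>" for x y
    proof (rule bounded_tensor_diag[where M=2])
      show "bounded_mat (K x y)" by (rule pos_kernel_bounded[OF pk that])
      fix i
      have "cmod (d x y i) \<le> cmod 1 + cmod (\<phi> i x * cnj (\<phi> i y))"
        unfolding d_def by (rule norm_triangle_ineq4)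
      also have "\<dots> \<le> 1 + 1 * 1"
        using bnd[OF that(1), of i] bnd[OF that(2), of i]
        by (simp add: norm_mult mult_le_one)
      finally show "cmod (d x y i) \<le> 2" by simp
    qed
    show "pos_kernel \<Omega> (\<lambda>x y. mat_tensor (mat_diff (mat_scale (complex_of_real (1\<^sup>2)) id_mat)
              (mat_mult (\<Phi> x) (mat_adj (\<Phi> y)))) (K x y))"
      unfolding Deq pos_kernel_def Let_def
    proof (intro conjI ballI allI impI)
      fix x y assume "x \<in> \<Omega>" "y \<in> \<Omega>"
      then show "bounded_mat (mat_tensor (dmat (d x y)) (K x y))" by (rule bT)
    next
      fix n :: nat and xs :: "nat \<Rightarrow> complex ^ 'n" and e :: "nat \<Rightarrow> (nat \<times> nat) vec"
      assume xe: "\<forall>k<n. xs k \<in> \<Omega> \<and> is_l2 (e k)"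
      define g where "g a b i = d (xs a) (xs b) i *
          cinner (mat_app (K (xs a) (xs b)) (\<lambda>j. e b (i, j))) (\<lambda>j. e a (i, j))" for a b i
      have gs: "g a b summable_on UNIV" if "a < n" "b < n" for a b
        unfolding g_def by (rule tensor_cinner(1)[OF bT]) (use xe that in auto)
      have ge: "cinner (mat_app (mat_tensor (dmat (d (xs a) (xs b))) (K (xs a) (xs b))) (e b)) (e a)
          = infsum (g a b) UNIV" if "a < n" "b < n" for a b
        unfolding g_def by (rule tensor_cinner(2)[OF bT]) (use xe that in auto)
      have "(\<Sum>a<n. \<Sum>b<n. cinner (mat_app (mat_tensor (dmat (d (xs a) (xs b))) (K (xs a) (xs b))) (e b)) (e a))
          = (\<Sum>a<n. \<Sum>b<n. infsum (g a b) UNIV)"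
        by (intro sum.cong refl ge) auto
      also have "\<dots> = (\<Sum>a<n. infsum (\<lambda>i. \<Sum>b<n. g a b i) UNIV)"
        by (intro sum.cong refl infsum_finsum[symmetric]) (auto intro: gs)
      also have "\<dots> = infsum (\<lambda>i. \<Sum>a<n. \<Sum>b<n. g a b i) UNIV"
        by (intro infsum_finsum[symmetric]) (auto intro!: summable_finsum gs)
      finally have seq: "(\<Sum>a<n. \<Sum>b<n. cinner (mat_app (mat_tensor (dmat (d (xs a) (xs b))) (K (xs a) (xs b))) (e b)) (e a))
          = infsum (\<lambda>i. \<Sum>a<n. \<Sum>b<n. g a b i) UNIV" .
      have "0 \<le> infsum (\<lambda>i. \<Sum>a<n. \<Sum>b<n. g a b i) UNIV"
      proof (rule infsum_nonneg_complex)
        show "(\<lambda>i. \<Sum>a<n. \<Sum>b<n. g a b i) summable_on UNIV"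
          by (auto intro!: summable_finsum gs)
        fix i
        show "0 \<le> (\<Sum>a<n. \<Sum>b<n. g a b i)"
          unfolding g_def d_def
          by (rule diag_pos[OF sa Ka]) (use xe in \<open>auto intro: l2_slice\<close>)
      qed
      then show "Im (\<Sum>i<n. \<Sum>j<n. cinner (mat_app (mat_tensor (dmat (d (xs i) (xs j))) (K (xs i) (xs j))) (e j)) (e i)) = 0"
        and "0 \<le> Re (\<Sum>i<n. \<Sum>j<n. cinner (mat_app (mat_tensor (dmat (d (xs i) (xs j))) (K (xs i) (xs j))) (e j)) (e i))"
        unfolding seq by (auto simp: less_eq_complex_def)
    qed
  qed simp
  have bdd: "bdd_below (Hinf_bounds \<Omega> \<Psi> \<Phi>)"
    unfolding Hinf_bounds_def by (rule bdd_belowI[of _ 0]) auto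
  have "\<Phi> \<in> schur_agler \<Omega> \<Psi>"
    unfolding schur_agler_def Hinf_def Hinf_norm_def
    using B1 one cInf_lower[OF one bdd] by blast
  moreover have "\<forall>i j. \<forall>z\<in>\<Omega>. cinner (mat_app (\<Phi> z) (std_basis i)) (std_basis j)
                          = (if i = j then \<phi> i z else 0)"
    unfolding \<Phi>_def basis_entry by simp
  ultimately show ?thesis by blast
qed

end
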